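(* For every integer $\kappa_c\ge0$, every agent $i$ and every softmax parameter $\theta$, $$\sup_{\overline Q_i^{\theta,\kappa_c}\in\mathcal Q_i^{\theta,\kappa_c}}\ \max_{s\in\mathcal S,\,a_i\in\mathcal A_i}\left|\overline Q_i^{\theta,\kappa_c}(s_{N_i^{\kappa_c}},a_i)-\overline Q_i^\theta(s,a_i)\right|\le\frac{2\min(\gamma^{\kappa_c-\kappa_r+1},1)}{1-\gamma}.$$
   Context: Networked Markov game. There are $n$ agents $\mathcal N=\{1,\dots,n\}$ placed at the nodes of an undirected graph $\mathcal G=(\mathcal N,\mathcal E)$ with graph distance $\mathrm{dist}$. For an integer $\kappa\ge0$, $N_i^\kappa=\{j\in\mathcal N:\mathrm{dist}(i,j)\le\kappa\}$ (so $i\in N_i^\kappa$), $\mathcal N_i=N_i^1$, $-N_i^\kappa=\mathcal N\setminus N_i^\kappa$, and $n(\kappa)=\max_i|N_i^\kappa|$. Agent $i$ has a finite local state space $\mathcal S_i$ and a finite local action space $\mathcal A_i$; $\mathcal S=\prod_i\mathcal S_i$, $\mathcal A=\prod_i\mathcal A_i$, and for $I\subseteq\mathcal N$ we write $s_I,a_I,\mathcal S_I,\mathcal A_I$ for the joint states/actions/spaces of the agents in $I$ (the subscript $-i$ means $\mathcal N\setminus\{i\}$). The dynamics are $\mathcal P(s'\mid s,a)=\prod_i\mathcal P_i(s_i'\mid s_{\mathcal N_i},a_i)$, the initial distribution is $\mu\in\Delta(\mathcal S)$, and $\gamma\in(0,1)$ is a discount factor. Each agent has a reward $r_i:\mathcal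 S\times\mathcal A\to[0,1]$ depending only on $(s_{N_i^{\kappa_r}},a_{N_i^{\kappa_r}})$ for a fixed integer $\kappa_r\ge0$. A local policy of agent $i$ is a map $\xi_i:\mathcal S_i\to\Delta(\mathcal A_i)$; $\Xi_i$ is the set of them, $\Xi_I=\prod_{i\in I}\Xi_i$, $\Xi=\Xi_{\mathcal N}$, and a joint policy $\xi=(\xi_1,\dots,\xi_n)$ acts by $\xi(a\mid s)=\prod_i\xi_i(a_i\mid s_i)$. For $\xi\in\Xi$: $Q_i^\xi(s,a)=\sum_{t\ge0}\gamma^t\mathbb E_\xi[r_i(s(t),a(t))\mid s(0)=s,a(0)=a]$; $\overline Q_i^\xi(s,a_i)=\mathbb E_{a_{-i}\sim\xi_{-i}(\cdot\mid s_{-i})}Q_i^\xi(s,a_i,a_{-i})$. Softmax policies: for $\theta_i\in\mathbb R^{|\mathcal S_i||\mathcal A_i|}$, $\xi_i^{\theta_i}(a_i\mid s_i)=\exp(\theta_{i,s_i,a_i})/\sum_{a_i'\in\mathcal A_i}\exp(\theta_{i,s_i,a_i'})$; $\xi^\theta=(\xi_1^{\theta_1},\dots,\xi_n^{\theta_n})$ and $\overline Q_i^\theta:=\overline Q_i^{\xi^\theta}$. Truncated averaged $Q$-functions: $\mathcal Q_i^{\theta,\kappa_c}$ is the set of all functions $\overline Q_i^{\theta,\kappa_c}:\mathcal S_{N_i^{\kappa_c}}\times\mathcal A_i\to\mathbb R$ for which there is a distribution $u_i\in\Delta(\mathcal S_{-N_i^{\kappa_c}})$ with $\overline Q_i^{\theta,\kappa_c}(s_{N_i^{\kappa_c}},a_i)=\mathbb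 E_{s_{-N_i^{\kappa_c}}\sim u_i}[\overline Q_i^\theta(s_{N_i^{\kappa_c}},s_{-N_i^{\kappa_c}},a_i)]$ for all $(s_{N_i^{\kappa_c}},a_i)$. *)

theory Defs
  imports "HOL-Analysis.Analysis" "HOL-Library.FuncSet"
begin

text \<open>Local state space of agent i is the finite
nonempty set Sl i (elements of a common type 's); local action space is Al i.\<close>

definition gstates :: "('i \<Rightarrow> 's set) \<Rightarrow> ('i \<Rightarrow> 's) set" where
  "gstates Sl = {s. \<forall>i. s i \<in> Sl i}"

text \<open>kappa-neighbourhood in the undirected graph with adjacency E:
 nbhd E k i = {j. dist(i,j) \<le> k}.\<close>
fun nbhd :: "('i \<Rightarrow> 'i \<Rightarrow> bool) \<Rightarrow> nat \<Rightarrow> 'i \<Rightarrow> 'i set" where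
  "nbhd E 0 i = {i}"
| "nbhd E (Suc k) i = nbhd E k i \<union> {j. \<exists>l\<in>nbhd E k i. E l j}"

definition softmax :: "('i \<Rightarrow> 'a set) \<Rightarrow> ('i \<Rightarrow> 's \<Rightarrow> 'a \<Rightarrow> real) \<Rightarrow> 'i \<Rightarrow> 's \<Rightarrow> 'a \<Rightarrow> real" where
  "softmax Al \<theta> i si ai = exp (\<theta> i si ai) / (\<Sum>b\<in>Al i. exp (\<theta> i si b))"

definition jpol :: "('i::finite \<Rightarrow> 'a set) \<Rightarrow> ('i \<Rightarrow> 's \<Rightarrow> 'a \<Rightarrow> real) \<Rightarrow> ('i \<Rightarrow> 's) \<Rightarrow> ('i \<Rightarrow> 'a) \<Rightarrow> real" where
  "jpol Al \<theta> s a = (\<Prod>i\<in>UNIV. softmax Al \<theta> i (s i) (a i))"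

text \<open>Transition P(s'|s,a) = prod_i P_i(s'_i | s, a_i); P i s ai x is the probability of
local next state x (locality in s is an assumption of the theorem).\<close>
definition trans :: "('i::finite \<Rightarrow> ('i \<Rightarrow> 's) \<Rightarrow> 'a \<Rightarrow> 's \<Rightarrow> real) \<Rightarrow> ('i \<Rightarrow> 's) \<Rightarrow> ('i \<Rightarrow> 'a) \<Rightarrow> ('i \<Rightarrow> 's) \<Rightarrow> real" where
  "trans P s a s' = (\<Prod>i\<in>UNIV. P i s (a i) (s' i))"

text \<open>occ Sl Al P \<theta> s0 a0 t (s,a): probability that (s(t),a(t)) = (s,a) given
s(0)=s0, a(0)=a0, under the softmax joint policy.\<close>
fun occ :: "('i::finite \<Rightarrow> 's set) \<Rightarrow> ('i \<Rightarrow> 'a set) \<Rightarrow> ('i \<Rightarrow> ('i \<Rightarrow> 's) \<Rightarrow> 'a \<Rightarrow> 's \<Rightarrow> real)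
   \<Rightarrow> ('i \<Rightarrow> 's \<Rightarrow> 'a \<Rightarrow> real) \<Rightarrow> ('i \<Rightarrow> 's) \<Rightarrow> ('i \<Rightarrow> 'a) \<Rightarrow> nat \<Rightarrow> ('i \<Rightarrow> 's) \<Rightarrow> ('i \<Rightarrow> 'a) \<Rightarrow> real" where
  "occ Sl Al P \<theta> s0 a0 0 s a = (if s = s0 \<and> a = a0 then 1 else 0)"
| "occ Sl Al P \<theta> s0 a0 (Suc t) s' a' =
     (\<Sum>s\<in>gstates Sl. \<Sum>a\<in>gstates Al. occ Sl Al P \<theta> s0 a0 t s a * trans P s a s' * jpol Al \<theta> s' a')"

definition Qfun :: "('i::finite \<Rightarrow> 's set) \<Rightarrow> ('i \<Rightarrow> 'a set) \<Rightarrow> ('i \<Rightarrow> ('i \<Rightarrow> 's) \<Rightarrow> 'a \<Rightarrow> 's \<Rightarrow> real)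
   \<Rightarrow> ('i \<Rightarrow> ('i \<Rightarrow> 's) \<Rightarrow> ('i \<Rightarrow> 'a) \<Rightarrow> real) \<Rightarrow> real \<Rightarrow> ('i \<Rightarrow> 's \<Rightarrow> 'a \<Rightarrow> real)
   \<Rightarrow> 'i \<Rightarrow> ('i \<Rightarrow> 's) \<Rightarrow> ('i \<Rightarrow> 'a) \<Rightarrow> real" where
  "Qfun Sl Al P r \<gamma> \<theta> i s0 a0 =
     (\<Sum>t. \<gamma> ^ t * (\<Sum>s\<in>gstates Sl. \<Sum>a\<in>gstates Al. occ Sl Al P \<theta> s0 a0 t s a * r i s a))"

definition Qbar :: "('i::finite \<Rightarrow> 's set) \<Rightarrow> ('i \<Rightarrow> 'a set) \<Rightarrow> ('i \<Rightarrow> ('i \<Rightarrow> 's) \<Rightarrow> 'a \<Rightarrow> 's \<Rightarrow> real)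
   \<Rightarrow> ('i \<Rightarrow> ('i \<Rightarrow> 's) \<Rightarrow> ('i \<Rightarrow> 'a) \<Rightarrow> real) \<Rightarrow> real \<Rightarrow> ('i \<Rightarrow> 's \<Rightarrow> 'a \<Rightarrow> real)
   \<Rightarrow> 'i \<Rightarrow> ('i \<Rightarrow> 's) \<Rightarrow> 'a \<Rightarrow> real" where
  "Qbar Sl Al P r \<gamma> \<theta> i s ai =
     (\<Sum>a\<in>{a\<in>gstates Al. a i = ai}.
        (\<Prod>j\<in>UNIV - {i}. softmax Al \<theta> j (s j) (a j)) * Qfun Sl Al P r \<gamma> \<theta> i s a)"

definition glue :: "'i set \<Rightarrow> ('i \<Rightarrow> 's) \<Rightarrow> ('i \<Rightarrow> 's) \<Rightarrow> ('i \<Rightarrow> 's)" where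
  "glue N x z = (\<lambda>j. if j \<in> N then x j else z j)"

text \<open>Such a function is
represented as f :: ('i => 's) => 'a => real whose first argument ranges over
the partial states PiE N Sl (N = N_i^{kappa_c}); its values elsewhere are irrelevant.\<close>
definition truncQ_set :: "('i::finite \<Rightarrow> 'i \<Rightarrow> bool) \<Rightarrow> ('i \<Rightarrow> 's set) \<Rightarrow> ('i \<Rightarrow> 'a set)
   \<Rightarrow> ('i \<Rightarrow> ('i \<Rightarrow> 's) \<Rightarrow> 'a \<Rightarrow> 's \<Rightarrow> real) \<Rightarrow> ('i \<Rightarrow> ('i \<Rightarrow> 's) \<Rightarrow> ('i \<Rightarrow> 'a) \<Rightarrow> real) \<Rightarrow> real
   \<Rightarrow> ('i \<Rightarrow> 's \<Rightarrow> 'a \<Rightarrow> real) \<Rightarrow> nat \<Rightarrow> 'i \<Rightarrow> (('i \<Rightarrow> 's) \<Rightarrow> 'a \<Rightarrow> real) set" where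
  "truncQ_set E Sl Al P r \<gamma> \<theta> \<kappa>c i =
     {f. \<exists>u. (\<forall>z\<in>PiE (- nbhd E \<kappa>c i) Sl. u z \<ge> 0)
           \<and> (\<Sum>z\<in>PiE (- nbhd E \<kappa>c i) Sl. u z) = 1
           \<and> (\<forall>x\<in>PiE (nbhd E \<kappa>c i) Sl. \<forall>ai\<in>Al i.
                f x ai = (\<Sum>z\<in>PiE (- nbhd E \<kappa>c i) Sl.
                            u z * Qbar Sl Al P r \<gamma> \<theta> i (glue (nbhd E \<kappa>c i) x z) ai))}"

end

theory Submission imports Defs begin

lemma gstates_PiE: "gstates A = PiE UNIV A"
  by (auto simp: gstates_def PiE_def extensional_def)

lemma sum_split_glue:
  fixes A :: "'i::finite \<Rightarrow> 'b set"
  assumes fin: "\<And>j. finite (A j)"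
  shows "(\<Sum>a\<in>gstates A. F a) = (\<Sum>x\<in>PiE N A. \<Sum>z\<in>PiE (-N) A. F (glue N x z))"
proof -
  have "(\<Sum>a\<in>gstates A. F a) = (\<Sum>(x,z)\<in>PiE N A \<times> PiE (-N) A. F (glue N x z))"
    by (rule sum.reindex_bij_witness[of _ "\<lambda>(x,z). glue N x z" "\<lambda>a. (restrict a N, restrict a (-N))"])
       (auto simp: glue_def gstates_def PiE_def extensional_def fun_eq_iff intro!: arg_cong[where f=F])
  also have "\<dots> = (\<Sum>x\<in>PiE N A. \<Sum>z\<in>PiE (-N) A. F (glue N x z))"
    by (rule sum.cartesian_product[symmetric])
  finally show ?thesis .
qed

lemma marg:
  fixes A :: "'i::finite \<Rightarrow> 'b set" and q :: "'i \<Rightarrow> 'b \<Rightarrow> real"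
  assumes fin: "\<And>j. finite (A j)" and z0: "z0 \<in> PiE (-N) A"
    and sum1: "\<And>j. j \<notin> N \<Longrightarrow> (\<Sum>b\<in>A j. q j b) = 1"
    and G: "\<And>a a'. a\<in>gstates A \<Longrightarrow> a'\<in>gstates A \<Longrightarrow> (\<forall>l\<in>N. a l = a' l) \<Longrightarrow> G a = G a'"
  shows "(\<Sum>a\<in>gstates A. (\<Prod>j\<in>UNIV. q j (a j)) * G a)
       = (\<Sum>x\<in>PiE N A. (\<Prod>j\<in>N. q j (x j)) * G (glue N x z0))"
proof -
  have "(\<Sum>a\<in>gstates A. (\<Prod>j\<in>UNIV. q j (a j)) * G a)
     = (\<Sum>x\<in>PiE N A. \<Sum>z\<in>PiE (-N) A. (\<Prod>j\<in>UNIV. q j (glue N x z j)) * G (glue N x z))"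
    by (rule sum_split_glue[OF fin])
  also have "\<dots> = (\<Sum>x\<in>PiE N A. \<Sum>z\<in>PiE (-N) A. ((\<Prod>j\<in>N. q j (x j)) * G (glue N x z0)) * (\<Prod>j\<in>-N. q j (z j)))"
  proof (intro sum.cong refl)
    fix x z assume x: "x \<in> PiE N A" and z: "z \<in> PiE (-N) A"
    have "(\<Prod>j\<in>UNIV. q j (glue N x z j)) = (\<Prod>j\<in>N. q j (glue N x z j)) * (\<Prod>j\<in>-N. q j (glue N x z j))"
      using prod.union_disjoint[of N "-N" "\<lambda>j. q j (glue N x z j)"] by simp
    also have "\<dots> = (\<Prod>j\<in>N. q j (x j)) * (\<Prod>j\<in>-N. q j (z j))"
      by (auto simp: glue_def intro!: arg_cong2[where f="(*)"] prod.cong)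
    finally have 1: "(\<Prod>j\<in>UNIV. q j (glue N x z j)) = (\<Prod>j\<in>N. q j (x j)) * (\<Prod>j\<in>-N. q j (z j))" .
    have "G (glue N x z) = G (glue N x z0)"
      using x z z0 by (intro G) (auto simp: glue_def gstates_def PiE_def Pi_def)
    then show "(\<Prod>j\<in>UNIV. q j (glue N x z j)) * G (glue N x z) = ((\<Prod>j\<in>N. q j (x j)) * G (glue N x z0)) * (\<Prod>j\<in>-N. q j (z j))"
      using 1 by simp
  qed
  also have "\<dots> = (\<Sum>x\<in>PiE N A. ((\<Prod>j\<in>N. q j (x j)) * G (glue N x z0)) * (\<Sum>z\<in>PiE (-N) A. \<Prod>j\<in>-N. q j (z j)))"
    by (simp add: sum_distrib_left)
  also have "(\<Sum>z\<in>PiE (-N) A. \<Prod>j\<in>-N. q j (z j)) = (\<Prod>j\<in>-N. \<Sum>b\<in>A j. q j b)"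
    by (rule prod_sum_PiE[symmetric]) (auto simp: fin)
  also have "\<dots> = 1" using sum1 by simp
  finally show ?thesis by simp
qed


lemma nbhd_self: "i \<in> nbhd E k i"
  by (induction k) auto

lemma nbhd_Suc_mono: "nbhd E k i \<subseteq> nbhd E (Suc k) i"
  by auto

lemma nbhd_mono: "m \<le> n \<Longrightarrow> nbhd E m i \<subseteq> nbhd E n i"
proof (induction n)
  case 0 then show ?case by simp
next
  case (Suc n) then show ?case using nbhd_Suc_mono[of E n i] by (cases "m = Suc n") auto
qed

lemma nbhd_step: "j \<in> nbhd E m i \<Longrightarrow> nbhd E 1 j \<subseteq> nbhd E (Suc m) i"
  by auto

locale mg =
  fixes E :: "'i::finite \<Rightarrow> 'i \<Rightarrow> bool"
    and Sl :: "'i \<Rightarrow> 's set" and Al :: "'i \<Rightarrow> 'a set"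
    and P :: "'i \<Rightarrow> ('i \<Rightarrow> 's) \<Rightarrow> 'a \<Rightarrow> 's \<Rightarrow> real"
    and r :: "'i \<Rightarrow> ('i \<Rightarrow> 's) \<Rightarrow> ('i \<Rightarrow> 'a) \<Rightarrow> real"
    and \<gamma> :: real and \<kappa>r :: nat
    and \<theta> :: "'i \<Rightarrow> 's \<Rightarrow> 'a \<Rightarrow> real" and i :: 'i
  assumes fin_S: "\<And>j. finite (Sl j)" and ne_S: "\<And>j. Sl j \<noteq> {}"
    and fin_A: "\<And>j. finite (Al j)" and ne_A: "\<And>j. Al j \<noteq> {}"
    and P_nonneg: "\<And>j s aj x. s \<in> gstates Sl \<Longrightarrow> aj \<in> Al j \<Longrightarrow> x \<in> Sl j \<Longrightarrow> P j s aj x \<ge> 0"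
    and P_sum: "\<And>j s aj. s \<in> gstates Sl \<Longrightarrow> aj \<in> Al j \<Longrightarrow> (\<Sum>x\<in>Sl j. P j s aj x) = 1"
    and P_local: "\<And>j s s' aj. s \<in> gstates Sl \<Longrightarrow> s' \<in> gstates Sl \<Longrightarrow>
        (\<forall>l\<in>nbhd E 1 j. s l = s' l) \<Longrightarrow> P j s aj = P j s' aj"
    and r_range: "\<And>j s a. s \<in> gstates Sl \<Longrightarrow> a \<in> gstates Al \<Longrightarrow> 0 \<le> r j s a \<and> r j s a \<le> 1"
    and r_local: "\<And>j s a s' a'. s \<in> gstates Sl \<Longrightarrow> a \<in> gstates Al \<Longrightarrow> s' \<in> gstates Sl \<Longrightarrow> a' \<in> gstates Al \<Longrightarrow>
        (\<forall>l\<in>nbhd E \<kappa>r j. s l = s' l \<and> a l = a' l) \<Longrightarrow> r j s a = r j s' a'"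
    and gamma: "0 < \<gamma>" "\<gamma> < 1"
begin

abbreviation "GS \<equiv> gstates Sl"
abbreviation "GA \<equiv> gstates Al"

lemma finGS: "finite GS" using fin_S by (simp add: gstates_PiE finite_PiE)
lemma finGA: "finite GA" using fin_A by (simp add: gstates_PiE finite_PiE)

definition Kop :: "(('i \<Rightarrow> 's) \<Rightarrow> ('i \<Rightarrow> 'a) \<Rightarrow> real) \<Rightarrow> ('i \<Rightarrow> 's) \<Rightarrow> ('i \<Rightarrow> 'a) \<Rightarrow> real" where
  "Kop g s a = (\<Sum>s'\<in>GS. trans P s a s' * (\<Sum>a'\<in>GA. jpol Al \<theta> s' a' * g s' a'))"

lemma softmax_nonneg: "softmax Al \<theta> j x b \<ge> 0"
  unfolding softmax_def by (intro divide_nonneg_nonneg sum_nonneg) auto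

lemma softmax_sum: "(\<Sum>b\<in>Al j. softmax Al \<theta> j x b) = 1"
proof -
  have "(\<Sum>b\<in>Al j. exp (\<theta> j x b)) > 0"
    using fin_A ne_A by (intro sum_pos) auto
  then show ?thesis unfolding softmax_def by (simp add: sum_divide_distrib[symmetric])
qed

lemma jpol_nonneg: "jpol Al \<theta> s a \<ge> 0"
  unfolding jpol_def by (intro prod_nonneg softmax_nonneg)

lemma jpol_sum: "(\<Sum>a\<in>GA. jpol Al \<theta> s a) = 1"
  unfolding jpol_def gstates_PiE
  by (subst prod_sum_PiE[symmetric]) (auto simp: fin_A softmax_sum)

lemma trans_nonneg: "s \<in> GS \<Longrightarrow> a \<in> GA \<Longrightarrow> s' \<in> GS \<Longrightarrow> trans P s a s' \<ge> 0"
  unfolding trans_def by (intro prod_nonneg P_nonneg) (auto simp: gstates_def)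

lemma trans_sum: assumes s: "s \<in> GS" and a: "a \<in> GA" shows "(\<Sum>s'\<in>GS. trans P s a s') = 1"
  unfolding trans_def gstates_PiE
proof -
  have "(\<Prod>j\<in>UNIV. \<Sum>x\<in>Sl j. P j s (a j) x) = 1"
    using s a by (intro prod.neutral ballI P_sum) (auto simp: gstates_def)
  then show "(\<Sum>s'\<in>Pi\<^sub>E UNIV Sl. \<Prod>j\<in>UNIV. P j s (a j) (s' j)) = 1"
    by (subst prod_sum_PiE[symmetric]) (auto simp: fin_S)
qed

lemma Kop_bound:
  assumes "\<And>s a. s \<in> GS \<Longrightarrow> a \<in> GA \<Longrightarrow> 0 \<le> g s a \<and> g s a \<le> 1"
    and s: "s \<in> GS" and a: "a \<in> GA"
  shows "0 \<le> Kop g s a \<and> Kop g s a \<le> 1"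
proof
  have h: "0 \<le> (\<Sum>a'\<in>GA. jpol Al \<theta> s' a' * g s' a') \<and> (\<Sum>a'\<in>GA. jpol Al \<theta> s' a' * g s' a') \<le> 1"
    if "s' \<in> GS" for s'
  proof
    show "0 \<le> (\<Sum>a'\<in>GA. jpol Al \<theta> s' a' * g s' a')"
      using assms that by (intro sum_nonneg mult_nonneg_nonneg jpol_nonneg) (auto simp: jpol_nonneg)
    have "(\<Sum>a'\<in>GA. jpol Al \<theta> s' a' * g s' a') \<le> (\<Sum>a'\<in>GA. jpol Al \<theta> s' a')"
      using assms that by (intro sum_mono mult_right_le_one_le jpol_nonneg) (auto simp: jpol_nonneg)
    then show "(\<Sum>a'\<in>GA. jpol Al \<theta> s' a' * g s' a') \<le> 1" by (simp add: jpol_sum)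
  qed
  show "0 \<le> Kop g s a" unfolding Kop_def
    using h s a assms(1) by (intro sum_nonneg mult_nonneg_nonneg trans_nonneg) (auto simp: jpol_nonneg)
  have "Kop g s a \<le> (\<Sum>s'\<in>GS. trans P s a s')" unfolding Kop_def
    using h s a assms(1) by (intro sum_mono mult_right_le_one_le trans_nonneg) (auto simp: jpol_nonneg trans_nonneg)
  then show "Kop g s a \<le> 1" using trans_sum[OF s a] by simp
qed

lemma occ_K:
  assumes s0: "s0 \<in> GS" and a0: "a0 \<in> GA"
  shows "(\<Sum>s\<in>GS. \<Sum>a\<in>GA. occ Sl Al P \<theta> s0 a0 t s a * g s a) = (Kop ^^ t) g s0 a0"
proof (induction t arbitrary: g)
  case 0
  have "(\<Sum>s\<in>GS. \<Sum>a\<in>GA. occ Sl Al P \<theta> s0 a0 0 s a * g s a)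
      = (\<Sum>s\<in>GS. if s = s0 then (\<Sum>a\<in>GA. if a = a0 then g s a else 0) else 0)"
    by (auto intro!: sum.cong)
  also have "\<dots> = g s0 a0" using s0 a0 finGS finGA by simp
  finally show ?case by simp
next
  case (Suc t)
  have "(\<Sum>s'\<in>GS. \<Sum>a'\<in>GA. occ Sl Al P \<theta> s0 a0 (Suc t) s' a' * g s' a')
     = (\<Sum>s'\<in>GS. \<Sum>a'\<in>GA. \<Sum>s\<in>GS. \<Sum>a\<in>GA. occ Sl Al P \<theta> s0 a0 t s a * (trans P s a s' * (jpol Al \<theta> s' a' * g s' a')))"
    by (simp add: sum_distrib_right mult.assoc)
  also have "\<dots> = (\<Sum>s'\<in>GS. \<Sum>s\<in>GS. \<Sum>a\<in>GA. \<Sum>a'\<in>GA. occ Sl Al P \<theta> s0 a0 t s a * (trans P s a s' * (jpol Al \<theta> s' a' * g s' a')))"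
    by (rule sum.cong[OF refl], subst sum.swap, rule sum.cong[OF refl], rule sum.swap)
  also have "\<dots> = (\<Sum>s\<in>GS. \<Sum>a\<in>GA. \<Sum>s'\<in>GS. \<Sum>a'\<in>GA. occ Sl Al P \<theta> s0 a0 t s a * (trans P s a s' * (jpol Al \<theta> s' a' * g s' a')))"
    by (subst sum.swap, rule sum.cong[OF refl], rule sum.swap)
  also have "\<dots> = (\<Sum>s\<in>GS. \<Sum>a\<in>GA. occ Sl Al P \<theta> s0 a0 t s a * Kop g s a)"
    unfolding Kop_def by (simp add: sum_distrib_left)
  also have "\<dots> = (Kop ^^ t) (Kop g) s0 a0" by (rule Suc.IH)
  also have "\<dots> = (Kop ^^ Suc t) g s0 a0" by (simp add: funpow_Suc_right del: funpow.simps)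
  finally show ?case .
qed


definition loc :: "nat \<Rightarrow> (('i \<Rightarrow> 's) \<Rightarrow> ('i \<Rightarrow> 'a) \<Rightarrow> real) \<Rightarrow> bool" where
  "loc m g \<longleftrightarrow> (\<forall>s\<in>GS. \<forall>a\<in>GA. \<forall>s'\<in>GS. \<forall>a'\<in>GA.
      (\<forall>l\<in>nbhd E m i. s l = s' l \<and> a l = a' l) \<longrightarrow> g s a = g s' a')"

lemma ex_PiE: assumes "\<And>j. A j \<noteq> {}" shows "\<exists>z. z \<in> PiE I A"
proof -
  have "PiE I A \<noteq> {}" using assms by (simp add: PiE_eq_empty_iff)
  then show ?thesis by blast
qed

lemma glue_in: "x \<in> PiE N A \<Longrightarrow> z \<in> PiE (-N) A \<Longrightarrow> glue N x z \<in> gstates A"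
  by (auto simp: glue_def gstates_def PiE_def Pi_def)

lemma loc_mono: "loc m g \<Longrightarrow> m \<le> n \<Longrightarrow> loc n g"
  unfolding loc_def using nbhd_mono[of m n E i] by blast

lemma Kop_loc:
  assumes L: "loc m g" shows "loc (Suc m) (Kop g)"
proof -
  define N where "N = nbhd E m i"
  define h where "h s'' = (\<Sum>a'\<in>GA. jpol Al \<theta> s'' a' * g s'' a')" for s''
  obtain zA where zA: "zA \<in> PiE (-N) Al" using ex_PiE[of Al, OF ne_A] by blast
  obtain zS where zS: "zS \<in> PiE (-N) Sl" using ex_PiE[of Sl, OF ne_S] by blast
  have hrep: "h s1 = (\<Sum>x\<in>PiE N Al. (\<Prod>j\<in>N. softmax Al \<theta> j (s1 j) (x j)) * g s1 (glue N x zA))"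
    if s1: "s1 \<in> GS" for s1
    unfolding h_def jpol_def
  proof (rule marg[OF fin_A zA softmax_sum])
    fix a a' assume "a \<in> GA" "a' \<in> GA" "\<forall>l\<in>N. a l = a' l"
    then show "g s1 a = g s1 a'" using L s1 unfolding loc_def N_def by blast
  qed
  have hloc: "h s1 = h s2" if s1: "s1 \<in> GS" and s2: "s2 \<in> GS" and ag: "\<forall>l\<in>N. s1 l = s2 l" for s1 s2
  proof -
    have "h s1 = (\<Sum>x\<in>PiE N Al. (\<Prod>j\<in>N. softmax Al \<theta> j (s1 j) (x j)) * g s1 (glue N x zA))"
      by (rule hrep[OF s1])
    also have "\<dots> = (\<Sum>x\<in>PiE N Al. (\<Prod>j\<in>N. softmax Al \<theta> j (s2 j) (x j)) * g s2 (glue N x zA))"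
    proof (intro sum.cong refl arg_cong2[where f="(*)"] prod.cong)
      fix x assume x: "x \<in> PiE N Al"
      show "g s1 (glue N x zA) = g s2 (glue N x zA)"
        using L s1 s2 ag glue_in[OF x zA] unfolding loc_def N_def by blast
    qed (use ag in auto)
    also have "\<dots> = h s2" by (rule hrep[OF s2, symmetric])
    finally show ?thesis .
  qed
  have Krep: "Kop g s a = (\<Sum>x\<in>PiE N Sl. (\<Prod>j\<in>N. P j s (a j) (x j)) * h (glue N x zS))"
    if s: "s \<in> GS" and a: "a \<in> GA" for s a
  proof -
    have "Kop g s a = (\<Sum>s''\<in>GS. (\<Prod>j\<in>UNIV. P j s (a j) (s'' j)) * h s'')"
      unfolding Kop_def trans_def h_def ..
    also have "\<dots> = (\<Sum>x\<in>PiE N Sl. (\<Prod>j\<in>N. P j s (a j) (x j)) * h (glue N x zS))"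
    proof (rule marg[OF fin_S zS])
      fix j assume "j \<notin> N"
      have "a j \<in> Al j" using a by (simp add: gstates_def)
      then show "(\<Sum>b\<in>Sl j. P j s (a j) b) = 1" by (rule P_sum[OF s])
    next
      fix x y assume "x \<in> GS" "y \<in> GS" "\<forall>l\<in>N. x l = y l"
      then show "h x = h y" by (rule hloc)
    qed
    finally show ?thesis .
  qed
  show ?thesis unfolding loc_def
  proof (intro ballI impI)
    fix s a s' a' assume s: "s \<in> GS" and a: "a \<in> GA" and s': "s' \<in> GS" and a': "a' \<in> GA"
      and ag: "\<forall>l\<in>nbhd E (Suc m) i. s l = s' l \<and> a l = a' l"
    have "Kop g s a = (\<Sum>x\<in>PiE N Sl. (\<Prod>j\<in>N. P j s (a j) (x j)) * h (glue N x zS))"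
      by (rule Krep[OF s a])
    also have "\<dots> = (\<Sum>x\<in>PiE N Sl. (\<Prod>j\<in>N. P j s' (a' j) (x j)) * h (glue N x zS))"
    proof (intro sum.cong refl arg_cong2[where f="(*)"] prod.cong)
      fix x j assume j: "j \<in> N"
      have "a j = a' j" using ag j nbhd_Suc_mono[of E m i] unfolding N_def by blast
      moreover have "\<forall>l\<in>nbhd E 1 j. s l = s' l"
        using ag nbhd_step[of j E m i] j unfolding N_def by blast
      then have "P j s (a j) = P j s' (a j)" by (rule P_local[OF s s'])
      ultimately show "P j s (a j) (x j) = P j s' (a' j) (x j)" by simp
    qed
    also have "\<dots> = Kop g s' a'" by (rule Krep[OF s' a', symmetric])
    finally show "Kop g s a = Kop g s' a'" .
  qed
qed

definition V :: "nat \<Rightarrow> ('i \<Rightarrow> 's) \<Rightarrow> ('i \<Rightarrow> 'a) \<Rightarrow> real" where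
  "V t = (Kop ^^ t) (r i)"

lemma V_bound: "s \<in> GS \<Longrightarrow> a \<in> GA \<Longrightarrow> 0 \<le> V t s a \<and> V t s a \<le> 1"
proof (induction t arbitrary: s a)
  case 0 then show ?case by (simp add: V_def r_range)
next
  case (Suc t)
  have "V (Suc t) s a = Kop (V t) s a" by (simp add: V_def)
  then show ?case using Kop_bound[of "V t", OF Suc.IH Suc.prems] by simp
qed

lemma V_loc: "loc (\<kappa>r + t) (V t)"
proof (induction t)
  case 0
  have "r i s a = r i s' a'" if "s \<in> GS" "a \<in> GA" "s' \<in> GS" "a' \<in> GA"
    "\<forall>l\<in>nbhd E \<kappa>r i. s l = s' l \<and> a l = a' l" for s a s' a'
    using r_local[OF that] .
  then show ?case unfolding V_def loc_def by (simp only: funpow_0 id_apply add_0_right) blast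
next
  case (Suc t)
  have "loc (Suc (\<kappa>r + t)) (Kop (V t))" by (rule Kop_loc[OF Suc.IH])
  then show ?case by (simp add: V_def)
qed


definition rho :: "'a \<Rightarrow> ('i \<Rightarrow> 's) \<Rightarrow> 'i \<Rightarrow> 'a \<Rightarrow> real" where
  "rho ai s j b = (if j = i then (if b = ai then 1 else 0) else softmax Al \<theta> j (s j) b)"

definition U :: "'a \<Rightarrow> nat \<Rightarrow> ('i \<Rightarrow> 's) \<Rightarrow> real" where
  "U ai t s = (\<Sum>a\<in>GA. (\<Prod>j\<in>UNIV. rho ai s j (a j)) * V t s a)"

lemma rho_nonneg: "0 \<le> rho ai s j b" by (simp add: rho_def softmax_nonneg)

lemma rho_sum: "ai \<in> Al i \<Longrightarrow> (\<Sum>b\<in>Al j. rho ai s j b) = 1"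
  by (cases "j = i") (simp_all add: rho_def softmax_sum fin_A)

lemma U_bound:
  assumes s: "s \<in> GS" and ai: "ai \<in> Al i"
  shows "0 \<le> U ai t s \<and> U ai t s \<le> 1"
proof
  show "0 \<le> U ai t s" unfolding U_def
    using s V_bound by (intro sum_nonneg mult_nonneg_nonneg prod_nonneg) (auto simp: rho_nonneg)
  have "U ai t s \<le> (\<Sum>a\<in>GA. \<Prod>j\<in>UNIV. rho ai s j (a j))" unfolding U_def
    using s V_bound by (intro sum_mono mult_right_le_one_le prod_nonneg) (auto simp: rho_nonneg)
  also have "\<dots> = (\<Prod>j\<in>UNIV. \<Sum>b\<in>Al j. rho ai s j b)"
    unfolding gstates_PiE by (rule prod_sum_PiE[symmetric]) (auto simp: fin_A)
  also have "\<dots> = 1" using rho_sum[OF ai] by simp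
  finally show "U ai t s \<le> 1" .
qed

lemma U_loc:
  assumes T: "t + \<kappa>r \<le> \<kappa>c" and s: "s \<in> GS" and s': "s' \<in> GS"
    and ag: "\<forall>l\<in>nbhd E \<kappa>c i. s l = s' l" and ai: "ai \<in> Al i"
  shows "U ai t s = U ai t s'"
proof -
  define Nc where "Nc = nbhd E \<kappa>c i"
  obtain z where z: "z \<in> PiE (-Nc) Al" using ex_PiE[of Al, OF ne_A] by blast
  have Lc: "loc \<kappa>c (V t)" using loc_mono[OF V_loc, of t \<kappa>c] T by simp
  have rep: "U ai t s1 = (\<Sum>x\<in>PiE Nc Al. (\<Prod>j\<in>Nc. rho ai s1 j (x j)) * V t s1 (glue Nc x z))"
    if s1: "s1 \<in> GS" for s1
    unfolding U_def
  proof (rule marg[OF fin_A z rho_sum[OF ai]])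
    fix a a' assume "a \<in> GA" "a' \<in> GA" "\<forall>l\<in>Nc. a l = a' l"
    then show "V t s1 a = V t s1 a'" using Lc s1 unfolding loc_def Nc_def by blast
  qed
  have "U ai t s = (\<Sum>x\<in>PiE Nc Al. (\<Prod>j\<in>Nc. rho ai s j (x j)) * V t s (glue Nc x z))"
    by (rule rep[OF s])
  also have "\<dots> = (\<Sum>x\<in>PiE Nc Al. (\<Prod>j\<in>Nc. rho ai s' j (x j)) * V t s' (glue Nc x z))"
  proof (intro sum.cong refl arg_cong2[where f="(*)"] prod.cong)
    fix x assume x: "x \<in> PiE Nc Al"
    have "glue Nc x z \<in> GA" by (rule glue_in[OF x z])
    then show "V t s (glue Nc x z) = V t s' (glue Nc x z)"
      using Lc s s' ag unfolding loc_def Nc_def by blast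
  next
    fix x j assume "j \<in> Nc"
    then show "rho ai s j (x j) = rho ai s' j (x j)" using ag unfolding rho_def Nc_def by simp
  qed
  also have "\<dots> = U ai t s'" by (rule rep[OF s', symmetric])
  finally show ?thesis .
qed

lemma Qfun_eq: "s \<in> GS \<Longrightarrow> a \<in> GA \<Longrightarrow> Qfun Sl Al P r \<gamma> \<theta> i s a = (\<Sum>t. \<gamma>^t * V t s a)"
  unfolding Qfun_def V_def by (simp add: occ_K)

lemma summ_geo_bound:
  assumes "\<And>t. 0 \<le> f t \<and> f t \<le> 1"
  shows "summable (\<lambda>t. \<gamma>^t * f t)"
proof (rule summable_comparison_test'[where N=0, OF summable_geometric[of \<gamma>]])
  show "norm \<gamma> < 1" using gamma by simp
  fix n show "norm (\<gamma>^n * f n) \<le> \<gamma>^n"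
    using assms[of n] gamma by (simp add: abs_mult mult_right_le_one_le)
qed

lemma summ_V: "s \<in> GS \<Longrightarrow> a \<in> GA \<Longrightarrow> summable (\<lambda>t. \<gamma>^t * V t s a)"
  by (rule summ_geo_bound) (simp add: V_bound)

lemma summ_U: "s \<in> GS \<Longrightarrow> ai \<in> Al i \<Longrightarrow> summable (\<lambda>t. \<gamma>^t * U ai t s)"
  by (rule summ_geo_bound) (simp add: U_bound)

lemma Qbar_eq:
  assumes s: "s \<in> GS" and ai: "ai \<in> Al i"
  shows "Qbar Sl Al P r \<gamma> \<theta> i s ai = (\<Sum>t. \<gamma>^t * U ai t s)"
proof -
  define F where "F = {a\<in>GA. a i = ai}"
  define w where "w a = (\<Prod>j\<in>UNIV - {i}. softmax Al \<theta> j (s j) (a j))" for a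
  have finF: "finite F" unfolding F_def using finGA by simp
  have Ueq: "U ai t s = (\<Sum>a\<in>F. w a * V t s a)" for t
  proof -
    have "(\<Prod>j\<in>UNIV. rho ai s j (a j)) = (if a i = ai then w a else 0)" for a
    proof -
      have "(\<Prod>j\<in>UNIV. rho ai s j (a j)) = rho ai s i (a i) * (\<Prod>j\<in>UNIV - {i}. rho ai s j (a j))"
        by (rule prod.remove) auto
      also have "(\<Prod>j\<in>UNIV - {i}. rho ai s j (a j)) = w a"
        unfolding w_def by (intro prod.cong refl) (auto simp: rho_def)
      finally show ?thesis by (simp add: rho_def)
    qed
    then have "U ai t s = (\<Sum>a\<in>GA. if a i = ai then w a * V t s a else 0)"
      unfolding U_def by (intro sum.cong refl) auto
    also have "\<dots> = (\<Sum>a\<in>F. w a * V t s a)"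
      unfolding F_def by (rule sum.inter_filter[OF finGA, symmetric])
    finally show ?thesis .
  qed
  have "Qbar Sl Al P r \<gamma> \<theta> i s ai = (\<Sum>a\<in>F. w a * Qfun Sl Al P r \<gamma> \<theta> i s a)"
    unfolding Qbar_def F_def w_def ..
  also have "\<dots> = (\<Sum>a\<in>F. (\<Sum>t. w a * (\<gamma>^t * V t s a)))"
    using s by (intro sum.cong refl) (auto simp: F_def Qfun_eq suminf_mult summ_V)
  also have "\<dots> = (\<Sum>t. \<Sum>a\<in>F. w a * (\<gamma>^t * V t s a))"
    using s by (intro suminf_sum[symmetric] summable_mult summ_V) (auto simp: F_def)
  also have "\<dots> = (\<Sum>t. \<gamma>^t * U ai t s)"
    by (simp add: Ueq sum_distrib_left mult.left_commute)
  finally show ?thesis .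
qed

lemma Qbar_diff:
  assumes s: "s \<in> GS" and s': "s' \<in> GS"
    and ag: "\<forall>l\<in>nbhd E \<kappa>c i. s l = s' l" and ai: "ai \<in> Al i"
  shows "\<bar>Qbar Sl Al P r \<gamma> \<theta> i s ai - Qbar Sl Al P r \<gamma> \<theta> i s' ai\<bar> \<le> \<gamma>^(\<kappa>c + 1 - \<kappa>r) / (1 - \<gamma>)"
proof -
  define T where "T = \<kappa>c + 1 - \<kappa>r"
  define d where "d t = \<gamma>^t * U ai t s - \<gamma>^t * U ai t s'" for t
  have sd: "summable d" unfolding d_def by (intro summable_diff summ_U s s' ai)
  have "Qbar Sl Al P r \<gamma> \<theta> i s ai - Qbar Sl Al P r \<gamma> \<theta> i s' ai = suminf d"
    unfolding Qbar_eq[OF s ai] Qbar_eq[OF s' ai] d_def by (intro suminf_diff summ_U s s' ai)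
  also have "\<dots> = (\<Sum>n. d (n + T)) + (\<Sum>t<T. d t)" by (rule suminf_split_initial_segment[OF sd])
  also have "(\<Sum>t<T. d t) = 0"
  proof (intro sum.neutral ballI)
    fix t assume "t \<in> {..<T}"
    then have "t + \<kappa>r \<le> \<kappa>c" unfolding T_def by auto
    then show "d t = 0" unfolding d_def using U_loc[OF _ s s' ag ai] by simp
  qed
  finally have eq: "Qbar Sl Al P r \<gamma> \<theta> i s ai - Qbar Sl Al P r \<gamma> \<theta> i s' ai = (\<Sum>n. d (n + T))" by simp
  have dle: "\<bar>d t\<bar> \<le> \<gamma>^t" for t
  proof -
    have "\<bar>U ai t s - U ai t s'\<bar> \<le> 1" using U_bound[OF s ai, of t] U_bound[OF s' ai, of t] by auto
    then have "\<gamma>^t * \<bar>U ai t s - U ai t s'\<bar> \<le> \<gamma>^t" using gamma by (simp add: mult_right_le_one_le)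
    then show ?thesis unfolding d_def using gamma by (simp add: abs_mult right_diff_distrib[symmetric])
  qed
  have sg: "summable (\<lambda>n. \<gamma>^(n+T))"
    using gamma by (intro summable_ignore_initial_segment summable_geometric) simp
  have sdT: "summable (\<lambda>n. d (n + T))" by (rule summable_ignore_initial_segment[OF sd])
  have "(\<Sum>n. d (n + T)) \<le> (\<Sum>n. \<gamma>^(n+T))"
    by (rule suminf_le[OF _ sdT sg]) (use dle in \<open>simp add: abs_le_iff\<close>)
  moreover have "-(\<Sum>n. \<gamma>^(n+T)) \<le> (\<Sum>n. d (n + T))"
  proof -
    have "(\<Sum>n. - (\<gamma>^(n+T))) \<le> (\<Sum>n. d (n + T))"
    proof (rule suminf_le[OF _ summable_minus[OF sg] sdT])
      fix n show "- (\<gamma>^(n+T)) \<le> d (n + T)" using dle[of "n+T"] by (simp add: abs_le_iff)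
    qed
    then show ?thesis by (simp add: suminf_minus[OF sg])
  qed
  moreover have "(\<Sum>n. \<gamma>^(n+T)) = \<gamma>^T / (1 - \<gamma>)"
  proof -
    have "(\<Sum>n. \<gamma>^(n+T)) = (\<Sum>n. \<gamma>^n * \<gamma>^T)" by (simp add: power_add)
    also have "\<dots> = (\<Sum>n. \<gamma>^n) * \<gamma>^T"
      using gamma by (intro suminf_mult2[symmetric] summable_geometric) simp
    also have "\<dots> = \<gamma>^T / (1 - \<gamma>)" using gamma by (simp add: suminf_geometric)
    finally show ?thesis .
  qed
  ultimately show ?thesis unfolding T_def[symmetric] using eq by (simp add: abs_le_iff)
qed

end

lemma final_ineq:
  fixes \<gamma> :: real
  assumes g: "0 < \<gamma>" "\<gamma> < 1"
  shows "\<gamma>^(\<kappa>c + 1 - \<kappa>r) / (1 - \<gamma>) \<le> 2 * min (\<gamma> powi (int \<kappa>c - int \<kappa>r + 1)) 1 / (1 - \<gamma>)"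
proof -
  have m: "\<gamma>^(\<kappa>c + 1 - \<kappa>r) \<le> min (\<gamma> powi (int \<kappa>c - int \<kappa>r + 1)) 1"
  proof (cases "\<kappa>r \<le> \<kappa>c + 1")
    case True
    then have e: "int \<kappa>c - int \<kappa>r + 1 = int (\<kappa>c + 1 - \<kappa>r)" by simp
    have pe: "\<gamma> powi (int \<kappa>c - int \<kappa>r + 1) = \<gamma>^(\<kappa>c + 1 - \<kappa>r)" unfolding e by (rule power_int_of_nat)
    have "\<gamma>^(\<kappa>c + 1 - \<kappa>r) \<le> 1" using g by (simp add: power_le_one)
    then show ?thesis unfolding pe by simp
  next
    case False
    then have k: "int \<kappa>c - int \<kappa>r + 1 < 0" by simp
    have "1 \<le> inverse \<gamma>" using g by (simp add: one_le_inverse)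
    then have "1 \<le> inverse \<gamma> ^ nat (- (int \<kappa>c - int \<kappa>r + 1))" by (rule one_le_power)
    then have "1 \<le> \<gamma> powi (int \<kappa>c - int \<kappa>r + 1)" using k by (simp add: power_int_def)
    moreover have "\<kappa>c + 1 - \<kappa>r = 0" using False by simp
    ultimately show ?thesis by simp
  qed
  have "0 \<le> \<gamma>^(\<kappa>c + 1 - \<kappa>r)" using g by simp
  then have "\<gamma>^(\<kappa>c + 1 - \<kappa>r) \<le> 2 * min (\<gamma> powi (int \<kappa>c - int \<kappa>r + 1)) 1" using m by linarith
  then show ?thesis using g by (intro divide_right_mono) auto
qed

theorem lemma1:
  fixes E :: "'i::finite \<Rightarrow> 'i \<Rightarrow> bool"
    and Sl :: "'i \<Rightarrow> 's set" and Al :: "'i \<Rightarrow> 'a set"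
    and P :: "'i \<Rightarrow> ('i \<Rightarrow> 's) \<Rightarrow> 'a \<Rightarrow> 's \<Rightarrow> real"
    and r :: "'i \<Rightarrow> ('i \<Rightarrow> 's) \<Rightarrow> ('i \<Rightarrow> 'a) \<Rightarrow> real"
    and \<gamma> :: real and \<kappa>r \<kappa>c :: nat
    and \<theta> :: "'i \<Rightarrow> 's \<Rightarrow> 'a \<Rightarrow> real" and i :: 'i
  assumes sym: "\<And>j k. E j k \<Longrightarrow> E k j"
    and fin_S: "\<And>j. finite (Sl j)" and ne_S: "\<And>j. Sl j \<noteq> {}"
    and fin_A: "\<And>j. finite (Al j)" and ne_A: "\<And>j. Al j \<noteq> {}"
    and P_nonneg: "\<And>j s aj x. s \<in> gstates Sl \<Longrightarrow> aj \<in> Al j \<Longrightarrow> x \<in> Sl j \<Longrightarrow> P j s aj x \<ge> 0"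
    and P_sum: "\<And>j s aj. s \<in> gstates Sl \<Longrightarrow> aj \<in> Al j \<Longrightarrow> (\<Sum>x\<in>Sl j. P j s aj x) = 1"
    and P_local: "\<And>j s s' aj. s \<in> gstates Sl \<Longrightarrow> s' \<in> gstates Sl \<Longrightarrow>
        (\<forall>l\<in>nbhd E 1 j. s l = s' l) \<Longrightarrow> P j s aj = P j s' aj"
    and r_range: "\<And>j s a. s \<in> gstates Sl \<Longrightarrow> a \<in> gstates Al \<Longrightarrow> 0 \<le> r j s a \<and> r j s a \<le> 1"
    and r_local: "\<And>j s a s' a'. s \<in> gstates Sl \<Longrightarrow> a \<in> gstates Al \<Longrightarrow> s' \<in> gstates Sl \<Longrightarrow> a' \<in> gstates Al \<Longrightarrow>
        (\<forall>l\<in>nbhd E \<kappa>r j. s l = s' l \<and> a l = a' l) \<Longrightarrow> r j s a = r j s' a'"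
    and gamma: "0 < \<gamma>" "\<gamma> < 1"
  shows "\<forall>f\<in>truncQ_set E Sl Al P r \<gamma> \<theta> \<kappa>c i. \<forall>s\<in>gstates Sl. \<forall>ai\<in>Al i.
           \<bar>f (restrict s (nbhd E \<kappa>c i)) ai - Qbar Sl Al P r \<gamma> \<theta> i s ai\<bar>
             \<le> 2 * min (\<gamma> powi (int \<kappa>c - int \<kappa>r + 1)) 1 / (1 - \<gamma>)"
proof (intro ballI)
  interpret M: mg E Sl Al P r \<gamma> \<kappa>r \<theta> i
    by (rule mg.intro; (fact fin_S ne_S fin_A ne_A P_nonneg P_sum P_local r_range r_local gamma)?)
  fix f s ai
  assume f: "f \<in> truncQ_set E Sl Al P r \<gamma> \<theta> \<kappa>c i" and s: "s \<in> gstates Sl" and ai: "ai \<in> Al i"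
  define Nc where "Nc = nbhd E \<kappa>c i"
  define Z where "Z = PiE (-Nc) Sl"
  define B where "B = \<gamma>^(\<kappa>c + 1 - \<kappa>r) / (1 - \<gamma>)"
  define Q where "Q s = Qbar Sl Al P r \<gamma> \<theta> i s ai" for s
  obtain u where u0: "\<forall>z\<in>Z. u z \<ge> 0" and u1: "(\<Sum>z\<in>Z. u z) = 1"
    and fu: "\<forall>x\<in>PiE Nc Sl. \<forall>ai\<in>Al i. f x ai = (\<Sum>z\<in>Z. u z * Qbar Sl Al P r \<gamma> \<theta> i (glue Nc x z) ai)"
    using f unfolding truncQ_set_def Nc_def Z_def by blast
  define x where "x = restrict s Nc"
  have x: "x \<in> PiE Nc Sl" using s unfolding x_def gstates_def by auto
  have bz: "\<bar>Q (glue Nc x z) - Q s\<bar> \<le> B" if z: "z \<in> Z" for z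
  proof -
    have g: "glue Nc x z \<in> gstates Sl" using M.glue_in[OF x] z unfolding Z_def by blast
    have "\<forall>l\<in>nbhd E \<kappa>c i. glue Nc x z l = s l" unfolding glue_def x_def Nc_def by simp
    then show ?thesis unfolding Q_def B_def by (rule M.Qbar_diff[OF g s _ ai])
  qed
  have finZ: "finite Z" unfolding Z_def using fin_S by (simp add: finite_PiE)
  have "f x ai - Q s = (\<Sum>z\<in>Z. u z * Q (glue Nc x z)) - (\<Sum>z\<in>Z. u z) * Q s"
    using fu x ai u1 unfolding Q_def by simp
  also have "\<dots> = (\<Sum>z\<in>Z. u z * (Q (glue Nc x z) - Q s))"
    by (simp add: sum_distrib_right right_diff_distrib sum_subtractf)
  finally have eq: "f x ai - Q s = (\<Sum>z\<in>Z. u z * (Q (glue Nc x z) - Q s))" .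
  have "\<bar>f x ai - Q s\<bar> \<le> (\<Sum>z\<in>Z. \<bar>u z * (Q (glue Nc x z) - Q s)\<bar>)"
    unfolding eq by (rule sum_abs)
  also have "\<dots> \<le> (\<Sum>z\<in>Z. u z * B)"
    using u0 bz by (intro sum_mono) (simp add: abs_mult mult_left_mono)
  also have "\<dots> = B" using u1 by (simp add: sum_distrib_right[symmetric])
  also have "\<dots> \<le> 2 * min (\<gamma> powi (int \<kappa>c - int \<kappa>r + 1)) 1 / (1 - \<gamma>)"
    unfolding B_def by (rule final_ineq[OF gamma])
  finally show "\<bar>f (restrict s (nbhd E \<kappa>c i)) ai - Qbar Sl Al P r \<gamma> \<theta> i s ai\<bar>
             \<le> 2 * min (\<gamma> powi (int \<kappa>c - int \<kappa>r + 1)) 1 / (1 - \<gamma>)"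
    unfolding x_def Nc_def Q_def .
qed

end
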